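(* Let $n\ge1$ and let $\mathbf{P}_{pen}=[p_{ij}]_{i,j=1}^{n+3}$ be a real symmetric non-negative definite matrix such that the $2\times2$ matrix $\begin{pmatrix}p_{1,1}&p_{1,n+3}\\ p_{n+3,1}&p_{n+3,n+3}\end{pmatrix}$ is invertible. Let $\Pi:\mathbb{R}^{n+3}\to\mathbb{R}^{n+1}$, $\Pi(u_1,\boldsymbol{p}^T,u_{n+1})^T=\boldsymbol{p}$, and for $\lambda>0$ let $\mathbf{H}_{\mathbf{P}_{pen}}(\lambda)=(\lambda\mathbf{P}_{pen}+\Pi^T\Pi)^{-1}$, so that $\mathbf{H}_{\mathbf{P}_{pen}}(\lambda)(0,\boldsymbol{y}^T,0)^T$ is the unique minimizer over $(u_1,\boldsymbol{p},u_{n+1})\in\mathbb{R}\times\mathbb{R}^{n+1}\times\mathbb{R}$ of $\lambda(u_1,\boldsymbol{p}^T,u_{n+1})\mathbf{P}_{pen}(u_1,\boldsymbol{p}^T,u_{n+1})^T+\|\boldsymbol{y}-\boldsymbol{p}\|^2$. Let $\boldsymbol{y}\in\mathbb{R}^{n+1}$. (1) As $\lambda\to0^+$, $\mathbf{H}_{\mathbf{P}_{pen}}(\lambda)(0,\boldsymbol{y}^T,0)^T\to(u_1^0,\boldsymbol{y}^T,u_{n+1}^0)^T$, where $(u_1^0,u_{n+1}^0)$ is a minimizer of $(u_1,u_{n+1})\mapsto(u_1,\boldsymbol{y}^T,u_{n+1})\mathbf{P}_{pen}(u_1,\boldsymbol{y}^T,u_{n+1})^T$, i.e. a solution of $$u_1p_{1,1}+u_{n+1}p_{1,n+3}=-\sum_{i=1}^{n+1}y_ip_{1,i+1},\qquad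 u_1p_{n+3,1}+u_{n+1}p_{n+3,n+3}=-\sum_{i=1}^{n+1}y_ip_{n+3,i+1}.$$ In particular, if $\boldsymbol{y}$ is not orthogonal to the space spanned by $(p_{1,j}:j=2,\dots,n+2)^T$ and $(p_{n+3,j}:j=2,\dots,n+2)^T$, then $u_1^0$ and $u_{n+1}^0$ are not both zero. (2) As $\lambda\to+\infty$, $\mathbf{H}_{\mathbf{P}_{pen}}(\lambda)(0,\boldsymbol{y}^T,0)^T\to\arg\min\{\|\boldsymbol{y}-\boldsymbol{p}\|^2:\ \mathbf{P}_{pen}(u_1,\boldsymbol{p}^T,u_{n+1})^T=0\}$.
   Context: Vectors of $\mathbb{R}^{n+3}$ are written $(u_1,\boldsymbol{p}^T,u_{n+1})^T$ with $u_1,u_{n+1}\in\mathbb{R}$ and $\boldsymbol{p}\in\mathbb{R}^{n+1}$ (in the paper these are the coordinates of a $C^2$ cubic spline: end second derivatives and knot values). $\|\cdot\|$ is the Euclidean norm. *)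

theory Defs
  imports "HOL-Analysis.Analysis"
begin

text \<open>Finite real matrices/vectors are represented by functions on nat with
explicit dimensions; all indices are 0-based.  A vector of R^(n+3) written
(u_1, p^T, u_(n+1))^T in the paper has u_1 at index 0, p_i at index i (i=1..n+1)
and u_(n+1) at index n+2.  The paper's entry p_(i,j) is P (i-1) (j-1).\<close>

type_synonym rmat = "nat \<Rightarrow> nat \<Rightarrow> real"
type_synonym rvec = "nat \<Rightarrow> real"

definition mmult :: "nat \<Rightarrow> rmat \<Rightarrow> rmat \<Rightarrow> rmat" where
  "mmult k A B = (\<lambda>i j. \<Sum>l<k. A i l * B l j)"

definition mvmult :: "nat \<Rightarrow> rmat \<Rightarrow> rvec \<Rightarrow> rvec" where
  "mvmult k A x = (\<lambda>i. \<Sum>j<k. A i j * x j)"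

definition transp :: "rmat \<Rightarrow> rmat" where
  "transp A = (\<lambda>i j. A j i)"

definition is_inverse :: "nat \<Rightarrow> rmat \<Rightarrow> rmat \<Rightarrow> bool" where
  "is_inverse N A B \<longleftrightarrow>
     (\<forall>i<N. \<forall>j<N. mmult N A B i j = (if i = j then 1 else 0)
                 \<and> mmult N B A i j = (if i = j then 1 else 0))"

definition minv :: "nat \<Rightarrow> rmat \<Rightarrow> rmat" where
  "minv N A = (THE B. is_inverse N A B \<and> (\<forall>i j. N \<le> i \<or> N \<le> j \<longrightarrow> B i j = 0))"

definition quadform :: "nat \<Rightarrow> rmat \<Rightarrow> rvec \<Rightarrow> real" where
  "quadform N P x = (\<Sum>i<N. \<Sum>j<N. x i * P i j * x j)"

definition symmetric_mat :: "nat \<Rightarrow> rmat \<Rightarrow> bool" where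
  "symmetric_mat N P \<longleftrightarrow> (\<forall>i<N. \<forall>j<N. P i j = P j i)"

definition nonneg_definite :: "nat \<Rightarrow> rmat \<Rightarrow> bool" where
  "nonneg_definite N P \<longleftrightarrow> (\<forall>x. quadform N P x \<ge> 0)"

text \<open>The projection Pi : R^(n+3) -> R^(n+1), (u_1,p,u_(n+1)) |-> p, as an (n+1) x (n+3) matrix.\<close>
definition PiM :: "nat \<Rightarrow> rmat" where
  "PiM n = (\<lambda>i j. if i \<le> n \<and> j = i + 1 then 1 else 0)"

definition Hpen :: "nat \<Rightarrow> rmat \<Rightarrow> real \<Rightarrow> rmat" where
  "Hpen n P lam = minv (n + 3) (\<lambda>i j. lam * P i j + mmult (n + 1) (transp (PiM n)) (PiM n) i j)"

text \<open>The vector (0, y^T, 0)^T = Pi^T y.\<close>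
definition embed0 :: "nat \<Rightarrow> rvec \<Rightarrow> rvec" where
  "embed0 n y = mvmult (n + 1) (transp (PiM n)) y"

definition joinv :: "nat \<Rightarrow> real \<Rightarrow> rvec \<Rightarrow> real \<Rightarrow> rvec" where
  "joinv n a y b = (\<lambda>i. if i = 0 then a else if i \<le> n + 1 then y (i - 1) else b)"

end

theory Submission
  imports Defs "Jordan_Normal_Form.Determinant"
begin

lemma inj_imp_inverse:
  fixes A :: rmat
  assumes inj: "\<And>x. (\<forall>i<N. mvmult N A x i = 0) \<Longrightarrow> (\<forall>i<N. x i = 0)"
  shows "\<exists>B. is_inverse N A B \<and> (\<forall>i j. N \<le> i \<or> N \<le> j \<longrightarrow> B i j = 0)"
proof -
  define JA where "JA = mat N N (\<lambda>(i,j). A i j)"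
  have JA: "JA \<in> carrier_mat N N" unfolding JA_def by auto
  have "det JA \<noteq> 0"
  proof
    assume "det JA = 0"
    then obtain v where v: "v \<in> carrier_vec N" "v \<noteq> 0\<^sub>v N" "JA *\<^sub>v v = 0\<^sub>v N"
      using det_0_iff_vec_prod_zero[OF JA] by auto
    define x where "x = (\<lambda>j. if j < N then v $ j else 0)"
    have "\<forall>i<N. mvmult N A x i = 0"
    proof (intro allI impI)
      fix i assume i: "i < N"
      have "(JA *\<^sub>v v) $ i = 0" using v(3) i by (metis index_zero_vec(1))
      moreover have "(JA *\<^sub>v v) $ i = (\<Sum>j<N. A i j * v $ j)"
        using i v(1) unfolding JA_def by (simp add: scalar_prod_def atLeast0LessThan)
      moreover have "mvmult N A x i = (\<Sum>j<N. A i j * v $ j)"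
        unfolding mvmult_def x_def by (intro sum.cong) auto
      ultimately show "mvmult N A x i = 0" by simp
    qed
    then have "\<forall>i<N. x i = 0" using inj by blast
    then have "v = 0\<^sub>v N" using v(1) unfolding x_def by (intro eq_vecI) auto
    with v(2) show False by simp
  qed
  from det_non_zero_imp_unit[OF JA this, unfolded Units_def, of "()"]
  obtain B where B: "B \<in> carrier_mat N N" and BA: "B * JA = 1\<^sub>m N" and AB: "JA * B = 1\<^sub>m N"
    by (auto simp: ring_mat_def)
  define Bf where "Bf = (\<lambda>i j. if i < N \<and> j < N then B $$ (i,j) else 0)"
  have "is_inverse N A Bf"
    unfolding is_inverse_def
  proof (intro allI impI conjI)
    fix i j assume i: "i < N" and j: "j < N"
    have "(JA * B) $$ (i,j) = (\<Sum>k<N. A i k * B $$ (k,j))"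
      using i j B unfolding JA_def by (simp add: scalar_prod_def atLeast0LessThan)
    moreover have "mmult N A Bf i j = (\<Sum>k<N. A i k * B $$ (k,j))"
      unfolding mmult_def Bf_def using j by (intro sum.cong) auto
    ultimately show "mmult N A Bf i j = (if i = j then 1 else 0)" using AB i j by simp
    have "(B * JA) $$ (i,j) = (\<Sum>k<N. B $$ (i,k) * A k j)"
      using i j B unfolding JA_def by (simp add: scalar_prod_def atLeast0LessThan)
    moreover have "mmult N Bf A i j = (\<Sum>k<N. B $$ (i,k) * A k j)"
      unfolding mmult_def Bf_def using i by (intro sum.cong) auto
    ultimately show "mmult N Bf A i j = (if i = j then 1 else 0)" using BA i j by simp
  qed
  then show ?thesis by (intro exI[of _ Bf]) (auto simp: Bf_def)
qed

lemma inverse_unique: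
  assumes "is_inverse N A B1" "\<forall>i j. N \<le> i \<or> N \<le> j \<longrightarrow> B1 i j = 0"
    and "is_inverse N A B2" "\<forall>i j. N \<le> i \<or> N \<le> j \<longrightarrow> B2 i j = 0"
  shows "B1 = B2"
proof (intro ext)
  fix i j
  show "B1 i j = B2 i j"
  proof (cases "i < N \<and> j < N")
    case True
    have "B1 i j = (\<Sum>k<N. B1 i k * (if k = j then 1 else 0))"
      using True by (simp add: if_distrib cong: if_cong)
    also have "\<dots> = (\<Sum>k<N. B1 i k * (\<Sum>l<N. A k l * B2 l j))"
      using assms(3) True unfolding is_inverse_def mmult_def by (intro sum.cong) auto
    also have "\<dots> = (\<Sum>k<N. \<Sum>l<N. B1 i k * A k l * B2 l j)"
      by (simp add: sum_distrib_left mult.assoc)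
    also have "\<dots> = (\<Sum>l<N. \<Sum>k<N. B1 i k * A k l * B2 l j)"
      by (rule sum.swap)
    also have "\<dots> = (\<Sum>l<N. (\<Sum>k<N. B1 i k * A k l) * B2 l j)"
      by (simp add: sum_distrib_right)
    also have "\<dots> = (\<Sum>l<N. (if i = l then 1 else 0) * B2 l j)"
      using assms(1) True unfolding is_inverse_def mmult_def by (intro sum.cong) auto
    also have "\<dots> = (\<Sum>l<N. if i = l then B2 l j else 0)" by (intro sum.cong) auto
    also have "\<dots> = B2 i j" using True by (simp add: sum.delta)
    finally show ?thesis .
  next
    case False
    then show ?thesis using assms(2,4) by auto
  qed
qed

lemma minv_inverse:
  assumes "\<exists>B. is_inverse N A B \<and> (\<forall>i j. N \<le> i \<or> N \<le> j \<longrightarrow> B i j = 0)"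
  shows "is_inverse N A (minv N A)"
proof -
  have "\<exists>!B. is_inverse N A B \<and> (\<forall>i j. N \<le> i \<or> N \<le> j \<longrightarrow> B i j = 0)"
    using assms inverse_unique by blast
  from theI'[OF this] show ?thesis unfolding minv_def by blast
qed

definition Dv :: "nat \<Rightarrow> nat \<Rightarrow> real" where "Dv n i = (if 1 \<le> i \<and> i \<le> n+1 then 1 else 0)"
definition Ev :: "nat \<Rightarrow> rvec \<Rightarrow> nat \<Rightarrow> real" where "Ev n y i = (if 1 \<le> i \<and> i \<le> n+1 then y (i-1) else 0)"
definition xl :: "nat \<Rightarrow> rmat \<Rightarrow> rvec \<Rightarrow> real \<Rightarrow> rvec" where
  "xl n P y lam = mvmult (n+3) (Hpen n P lam) (embed0 n y)"

lemma G_eq: "mmult (n + 1) (transp (PiM n)) (PiM n) i j = (if i = j then Dv n i else 0)"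
proof -
  have "mmult (n + 1) (transp (PiM n)) (PiM n) i j
      = (\<Sum>l<n+1. if l = i - 1 then (if i = j \<and> 1 \<le> i then 1 else 0) else 0)"
    unfolding mmult_def transp_def PiM_def by (intro sum.cong) auto
  also have "\<dots> = (if i = j then Dv n i else 0)"
    unfolding Dv_def by (auto simp: sum.delta')
  finally show ?thesis .
qed

lemma embed0_eq: "embed0 n y = Ev n y"
proof
  fix i
  have "embed0 n y i = (\<Sum>l<n+1. if l = i - 1 then (if 1 \<le> i then y l else 0) else 0)"
    unfolding embed0_def mvmult_def transp_def PiM_def by (intro sum.cong) auto
  also have "\<dots> = Ev n y i" unfolding Ev_def by (auto simp: sum.delta')
  finally show "embed0 n y i = Ev n y i" .
qed

lemma sum_split3: "(\<Sum>i<n+3. f i) = f 0 + (\<Sum>i\<le>n. f (Suc i)) + (f (n+2) :: real)"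
proof -
  have "(\<Sum>i<n+3. f i) = (\<Sum>i<Suc (n+1). f i) + f (n+2)"
    by (simp add: numeral_3_eq_3)
  also have "(\<Sum>i<Suc (n+1). f i) = f 0 + (\<Sum>i<n+1. f (Suc i))"
    by (rule sum.lessThan_Suc_shift)
  also have "(\<Sum>i<n+1. f (Suc i)) = (\<Sum>i\<le>n. f (Suc i))"
    by (simp add: lessThan_Suc_atMost)
  finally show ?thesis .
qed

lemma cramer2:
  fixes a b c e u w r s :: real
  assumes "a * u + b * w = r" "c * u + e * w = s" "a * e - b * c \<noteq> 0"
  shows "u = (e * r - b * s) / (a * e - b * c)" "w = (a * s - c * r) / (a * e - b * c)"
proof -
  have "(a * e - b * c) * u = e * r - b * s" using assms(1,2) by (auto simp: algebra_simps)
  then show "u = (e * r - b * s) / (a * e - b * c)" using assms(3) by (simp add: field_simps)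
  have "(a * e - b * c) * w = a * s - c * r" using assms(1,2) by (auto simp: algebra_simps)
  then show "w = (a * s - c * r) / (a * e - b * c)" using assms(3) by (simp add: field_simps)
qed

definition Bf :: "nat \<Rightarrow> rmat \<Rightarrow> rvec \<Rightarrow> rvec \<Rightarrow> real" where
  "Bf N P u v = (\<Sum>i<N. u i * mvmult N P v i)"

lemma quadform_Bf: "quadform N P x = Bf N P x x"
  unfolding quadform_def Bf_def mvmult_def by (simp add: sum_distrib_left mult.assoc)

lemma Bf_sym: assumes "symmetric_mat N P" shows "Bf N P u v = Bf N P v u"
proof -
  have "Bf N P u v = (\<Sum>i<N. \<Sum>j<N. u i * P i j * v j)"
    unfolding Bf_def mvmult_def by (simp add: sum_distrib_left mult.assoc)
  also have "\<dots> = (\<Sum>j<N. \<Sum>i<N. u i * P i j * v j)" by (rule sum.swap)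
  also have "\<dots> = (\<Sum>j<N. \<Sum>i<N. v j * P j i * u i)"
    using assms unfolding symmetric_mat_def by (intro sum.cong refl) (auto simp: mult_ac)
  also have "\<dots> = Bf N P v u"
    unfolding Bf_def mvmult_def by (simp add: sum_distrib_left mult.assoc)
  finally show ?thesis .
qed

lemma mvmult_diff: "mvmult N P (\<lambda>i. u i - v i) j = mvmult N P u j - mvmult N P v j"
  unfolding mvmult_def by (simp add: right_diff_distrib sum_subtractf)

lemma mvmult_M:
  assumes "i < n+3"
  shows "mvmult (n+3) (\<lambda>i j. lam * P i j + mmult (n + 1) (transp (PiM n)) (PiM n) i j) x i
         = lam * mvmult (n+3) P x i + Dv n i * x i"
proof -
  have "mvmult (n+3) (\<lambda>i j. lam * P i j + mmult (n + 1) (transp (PiM n)) (PiM n) i j) x i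
      = (\<Sum>j<n+3. lam * (P i j * x j) + (if i = j then Dv n i * x j else 0))"
    unfolding mvmult_def G_eq by (intro sum.cong) (auto simp: algebra_simps)
  also have "\<dots> = lam * mvmult (n+3) P x i + Dv n i * x i"
    using assms by (simp add: sum.distrib sum_distrib_left mvmult_def sum.delta)
  finally show ?thesis .
qed


lemma Dsum: "(\<Sum>i<n+3. Dv n i * f i) = (\<Sum>i\<le>n. f (Suc i))"
proof -
  have "(\<Sum>i<n+3. Dv n i * f i) = (\<Sum>i\<le>n. Dv n (Suc i) * f (Suc i))"
    by (simp add: sum_split3 Dv_def)
  also have "\<dots> = (\<Sum>i\<le>n. f (Suc i))" by (intro sum.cong) (auto simp: Dv_def)
  finally show ?thesis .
qed

lemma Esum: "(\<Sum>i<n+3. f i * Ev n y i) = (\<Sum>i\<le>n. f (Suc i) * y i)"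
  by (simp add: sum_split3 Ev_def)

lemma idx_cases:
  assumes "i < n+3"
  obtains "i = 0" | "i = n+2" | j where "j \<le> n" "i = Suc j"
proof (cases "i = 0 \<or> i = n+2")
  case True then show ?thesis using that by auto
next
  case False then have "i - 1 \<le> n" "i = Suc (i-1)" using assms by auto
  then show ?thesis using that by blast
qed

lemma energy_split:
  "(\<Sum>i<N. x i * (lam * mvmult N P x i + Dv n i * x i)) = lam * Bf N P x x + (\<Sum>i<N. Dv n i * (x i)^2)"
proof -
  have "(\<Sum>i<N. x i * (lam * mvmult N P x i + Dv n i * x i))
     = (\<Sum>i<N. lam * (x i * mvmult N P x i) + Dv n i * (x i)^2)"
    by (intro sum.cong) (auto simp: algebra_simps power2_eq_square)
  also have "\<dots> = lam * Bf N P x x + (\<Sum>i<N. Dv n i * (x i)^2)"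
    by (simp only: sum.distrib sum_distrib_left[symmetric] Bf_def)
  finally show ?thesis .
qed


lemma Bf_add_right: "Bf N P u (\<lambda>i. v i + w i) = Bf N P u v + Bf N P u w"
  unfolding Bf_def mvmult_def by (simp add: distrib_left sum.distrib)

lemma Bf_add_left: "Bf N P (\<lambda>i. u i + v i) w = Bf N P u w + Bf N P v w"
  unfolding Bf_def by (simp add: distrib_right sum.distrib)

lemma Bf_split: "Bf (n+3) P u v = u 0 * mvmult (n+3) P v 0 + (\<Sum>j\<le>n. u (Suc j) * mvmult (n+3) P v (Suc j))
   + u (n+2) * mvmult (n+3) P v (n+2)"
  unfolding Bf_def by (rule sum_split3)


lemma real_bw:
  fixes s :: "nat \<Rightarrow> real"
  assumes "\<forall>k. \<bar>s k\<bar> \<le> C"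
  shows "\<exists>f l. strict_mono f \<and> (\<lambda>k. s (f k)) \<longlonglongrightarrow> l"
proof -
  obtain f where f: "strict_mono f" "monoseq (\<lambda>k. s (f k))" using seq_monosub by blast
  have "Bseq (\<lambda>k. s (f k))" using assms by (intro BseqI'[of _ C]) simp
  then have "convergent (\<lambda>k. s (f k))" using f(2) Bseq_monoseq_convergent by blast
  then obtain l where "(\<lambda>k. s (f k)) \<longlonglongrightarrow> l" by (auto simp: convergent_def)
  with f show ?thesis by blast
qed

lemma bw_finite:
  fixes X :: "nat \<Rightarrow> nat \<Rightarrow> real"
  assumes "\<forall>k. \<forall>i<m. \<bar>X k i\<bar> \<le> C i"
  shows "\<exists>r l. strict_mono r \<and> (\<forall>i<m. (\<lambda>k. X (r k) i) \<longlonglongrightarrow> l i)"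
  using assms
proof (induction m)
  case 0
  show ?case by (rule exI[of _ id]) (auto simp: strict_mono_def)
next
  case (Suc m)
  have "\<forall>k. \<forall>i<m. \<bar>X k i\<bar> \<le> C i" using Suc.prems by auto
  then obtain r l where r: "strict_mono r" "\<forall>i<m. (\<lambda>k. X (r k) i) \<longlonglongrightarrow> l i"
    using Suc.IH by blast
  have "\<forall>k. \<bar>X (r k) m\<bar> \<le> C m" using Suc.prems by auto
  then obtain f lm where f: "strict_mono f" "(\<lambda>k. X (r (f k)) m) \<longlonglongrightarrow> lm"
    using real_bw[of "\<lambda>k. X (r k) m"] by blast
  define l' where "l' = l(m := lm)"
  have sm: "strict_mono (r \<circ> f)" using strict_mono_o r(1) f(1) by blast
  have "\<forall>i<Suc m. (\<lambda>k. X ((r \<circ> f) k) i) \<longlonglongrightarrow> l' i"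
  proof (intro allI impI)
    fix i assume i: "i < Suc m"
    show "(\<lambda>k. X ((r \<circ> f) k) i) \<longlonglongrightarrow> l' i"
    proof (cases "i = m")
      case True then show ?thesis using f(2) by (simp add: l'_def o_def)
    next
      case False
      then have "i < m" using i by simp
      from LIMSEQ_subseq_LIMSEQ[OF r(2)[rule_format, OF this] f(1)]
      show ?thesis using False by (simp add: l'_def o_def)
    qed
  qed
  with sm show ?case by blast
qed

lemma inv_left:
  assumes "is_inverse N A B" "i < N"
  shows "(\<Sum>k<N. B i k * mvmult N A x k) = x i"
proof -
  have "(\<Sum>k<N. B i k * mvmult N A x k) = (\<Sum>k<N. \<Sum>j<N. B i k * A k j * x j)"
    unfolding mvmult_def by (simp add: sum_distrib_left mult.assoc)
  also have "\<dots> = (\<Sum>j<N. \<Sum>k<N. B i k * A k j * x j)" by (rule sum.swap)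
  also have "\<dots> = (\<Sum>j<N. (\<Sum>k<N. B i k * A k j) * x j)" by (simp add: sum_distrib_right)
  also have "\<dots> = (\<Sum>j<N. if i = j then x j else 0)"
    using assms unfolding is_inverse_def mmult_def by (intro sum.cong) auto
  also have "\<dots> = x i" using assms(2) by (simp add: sum.delta)
  finally show ?thesis .
qed

lemma mvmult_lin: "mvmult N P (\<lambda>i. a * u i + b * v i) j = a * mvmult N P u j + b * mvmult N P v j"
  unfolding mvmult_def by (simp add: sum.distrib sum_distrib_left algebra_simps)

context
  fixes n :: nat and P :: rmat
  assumes sym: "symmetric_mat (n+3) P" and psd: "nonneg_definite (n+3) P"
    and det: "P 0 0 * P (n+2) (n+2) - P 0 (n+2) * P (n+2) 0 \<noteq> 0"
begin

lemma mv_split: "mvmult (n+3) P x i = P i 0 * x 0 + (\<Sum>j\<le>n. P i (Suc j) * x (Suc j)) + P i (n+2) * x (n+2)"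
  unfolding mvmult_def by (rule sum_split3)

lemma Bf_nonneg: "Bf (n+3) P x x \<ge> 0"
  using psd quadform_Bf unfolding nonneg_definite_def by metis

lemma ends_zero:
  assumes "mvmult (n+3) P d 0 = 0" "mvmult (n+3) P d (n+2) = 0" "\<forall>i\<le>n. d (Suc i) = 0"
  shows "d 0 = 0" "d (n+2) = 0"
proof -
  have h1: "P 0 0 * d 0 + P 0 (n+2) * d (n+2) = 0" using assms(1,3) by (simp add: mv_split)
  have h2: "P (n+2) 0 * d 0 + P (n+2) (n+2) * d (n+2) = 0" using assms(2,3) by (simp add: mv_split)
  show "d 0 = 0" "d (n+2) = 0" using cramer2[OF h1 h2 det] by simp_all
qed

lemma M_inj:
  assumes "lam > 0" "\<forall>i<n+3. lam * mvmult (n+3) P x i + Dv n i * x i = 0"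
  shows "\<forall>i<n+3. x i = 0"
proof -
  have "0 = (\<Sum>i<n+3. x i * (lam * mvmult (n+3) P x i + Dv n i * x i))" using assms(2) by simp
  also have "\<dots> = lam * Bf (n+3) P x x + (\<Sum>i<n+3. Dv n i * (x i)^2)"
    by (rule energy_split)
  also have "(\<Sum>i<n+3. Dv n i * (x i)^2) = (\<Sum>i\<le>n. (x (Suc i))^2)" by (rule Dsum)
  finally have e: "lam * Bf (n+3) P x x + (\<Sum>i\<le>n. (x (Suc i))^2) = 0" by simp
  have "lam * Bf (n+3) P x x \<ge> 0" using assms(1) Bf_nonneg by simp
  moreover have "(\<Sum>i\<le>n. (x (Suc i))^2) \<ge> 0" by (simp add: sum_nonneg)
  ultimately have "(\<Sum>i\<le>n. (x (Suc i))^2) = 0" using e by linarith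
  then have mid: "\<forall>i\<le>n. x (Suc i) = 0" by (simp add: sum_nonneg_eq_0_iff)
  have "mvmult (n+3) P x 0 = 0" using assms(2)[rule_format, of 0] assms(1) by (simp add: Dv_def)
  moreover have "mvmult (n+3) P x (n+2) = 0" using assms(2)[rule_format, of "n+2"] assms(1) by (simp add: Dv_def)
  ultimately have ends: "x 0 = 0" "x (n+2) = 0" using ends_zero mid by auto
  show ?thesis
  proof (intro allI impI)
    fix i assume "i < n+3"
    then show "x i = 0" by (cases rule: idx_cases) (use mid ends in auto)
  qed
qed

lemma Hpen_inverse:
  assumes "lam > 0"
  shows "is_inverse (n+3) (\<lambda>i j. lam * P i j + mmult (n + 1) (transp (PiM n)) (PiM n) i j) (Hpen n P lam)"
proof -
  define M where "M = (\<lambda>i j. lam * P i j + mmult (n + 1) (transp (PiM n)) (PiM n) i j)"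
  have "\<exists>B. is_inverse (n+3) M B \<and> (\<forall>i j. n+3 \<le> i \<or> n+3 \<le> j \<longrightarrow> B i j = 0)"
  proof (rule inj_imp_inverse)
    fix x assume h: "\<forall>i<n+3. mvmult (n+3) M x i = 0"
    have "\<forall>i<n+3. lam * mvmult (n+3) P x i + Dv n i * x i = 0"
    proof (intro allI impI)
      fix i assume i: "i < n+3"
      show "lam * mvmult (n+3) P x i + Dv n i * x i = 0"
        using h i mvmult_M[OF i, where lam=lam and x=x and P=P] unfolding M_def by simp
    qed
    then show "\<forall>i<n+3. x i = 0" using M_inj[OF assms] by blast
  qed
  then have "is_inverse (n+3) M (minv (n+3) M)" by (rule minv_inverse)
  then show ?thesis unfolding M_def Hpen_def by simp
qed

lemma xl_eq:
  assumes "lam > 0" "i < n+3"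
  shows "lam * mvmult (n+3) P (xl n P y lam) i + Dv n i * xl n P y lam i = Ev n y i"
proof -
  define M where "M = (\<lambda>i j. lam * P i j + mmult (n + 1) (transp (PiM n)) (PiM n) i j)"
  define H where "H = Hpen n P lam"
  have inv: "is_inverse (n+3) M H" unfolding M_def H_def by (rule Hpen_inverse[OF assms(1)])
  have "mvmult (n+3) M (xl n P y lam) i = (\<Sum>j<n+3. M i j * (\<Sum>k<n+3. H j k * Ev n y k))"
    by (simp add: xl_def mvmult_def embed0_eq H_def)
  also have "\<dots> = (\<Sum>j<n+3. \<Sum>k<n+3. M i j * H j k * Ev n y k)"
    by (simp add: sum_distrib_left mult.assoc)
  also have "\<dots> = (\<Sum>k<n+3. \<Sum>j<n+3. M i j * H j k * Ev n y k)" by (rule sum.swap)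
  also have "\<dots> = (\<Sum>k<n+3. (\<Sum>j<n+3. M i j * H j k) * Ev n y k)"
    by (simp add: sum_distrib_right)
  also have "\<dots> = (\<Sum>k<n+3. if i = k then Ev n y k else 0)"
    using inv assms(2) unfolding is_inverse_def mmult_def by (intro sum.cong) auto
  also have "\<dots> = Ev n y i" using assms(2) by (simp add: sum.delta)
  finally have eq1: "mvmult (n+3) M (xl n P y lam) i = Ev n y i" .
  have eq2: "mvmult (n+3) M (xl n P y lam) i = lam * mvmult (n+3) P (xl n P y lam) i + Dv n i * xl n P y lam i"
    unfolding M_def by (rule mvmult_M[OF assms(2)])
  show ?thesis using eq1 eq2 by simp
qed

lemma xl_energy:
  assumes "lam > 0"
  shows "lam * Bf (n+3) P (xl n P y lam) (xl n P y lam) + (\<Sum>i\<le>n. (xl n P y lam (Suc i))^2)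
       = (\<Sum>i\<le>n. xl n P y lam (Suc i) * y i)"
proof -
  let ?x = "xl n P y lam"
  have "(\<Sum>i<n+3. ?x i * (lam * mvmult (n+3) P ?x i + Dv n i * ?x i)) = (\<Sum>i<n+3. ?x i * Ev n y i)"
    using xl_eq[OF assms] by simp
  also have "\<dots> = (\<Sum>i\<le>n. ?x (Suc i) * y i)" by (rule Esum)
  also have "(\<Sum>i<n+3. ?x i * (lam * mvmult (n+3) P ?x i + Dv n i * ?x i))
      = lam * Bf (n+3) P ?x ?x + (\<Sum>i<n+3. Dv n i * (?x i)^2)"
    by (rule energy_split)
  also have "(\<Sum>i<n+3. Dv n i * (?x i)^2) = (\<Sum>i\<le>n. (?x (Suc i))^2)" by (rule Dsum)
  finally show ?thesis .
qed

lemma xl_mid_bound: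
  assumes "lam > 0"
  shows "(\<Sum>i\<le>n. (xl n P y lam (Suc i))^2) \<le> (\<Sum>i\<le>n. (y i)^2)"
proof -
  let ?x = "xl n P y lam"
  have "lam * Bf (n+3) P ?x ?x \<ge> 0" using assms Bf_nonneg by simp
  then have "(\<Sum>i\<le>n. (?x (Suc i))^2) \<le> (\<Sum>i\<le>n. ?x (Suc i) * y i)" using xl_energy[OF assms, of y] by linarith
  also have "\<dots> \<le> (\<Sum>i\<le>n. ((?x (Suc i))^2 + (y i)^2) / 2)"
  proof (intro sum_mono)
    fix i show "?x (Suc i) * y i \<le> ((?x (Suc i))^2 + (y i)^2) / 2"
      using sum_squares_bound[of "?x (Suc i)" "y i"] by (simp add: power2_eq_square algebra_simps) 
  qed
  also have "\<dots> = (\<Sum>i\<le>n. (?x (Suc i))^2) / 2 + (\<Sum>i\<le>n. (y i)^2) / 2"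
    by (simp add: sum_divide_distrib[symmetric] sum.distrib add_divide_distrib)
  finally show ?thesis by linarith
qed


lemma xl_row0: "lam > 0 \<Longrightarrow> mvmult (n+3) P (xl n P y lam) 0 = 0"
  using xl_eq[of lam 0 y] by (simp add: Dv_def Ev_def)

lemma xl_row2: "lam > 0 \<Longrightarrow> mvmult (n+3) P (xl n P y lam) (n+2) = 0"
  using xl_eq[of lam "n+2" y] by (simp add: Dv_def Ev_def)

lemma xl_rowS: "lam > 0 \<Longrightarrow> j \<le> n \<Longrightarrow> lam * mvmult (n+3) P (xl n P y lam) (Suc j) + xl n P y lam (Suc j) = y j"
  using xl_eq[of lam "Suc j" y] by (simp add: Dv_def Ev_def)

lemma part1_est:
  assumes lam: "lam > 0" and z0: "mvmult (n+3) P z 0 = 0" and z2: "mvmult (n+3) P z (n+2) = 0"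
    and zS: "\<forall>j\<le>n. z (Suc j) = y j"
  shows "(\<Sum>j\<le>n. (xl n P y lam (Suc j) - y j)^2) \<le> lam^2 * (\<Sum>j\<le>n. (mvmult (n+3) P z (Suc j))^2)"
proof -
  define x where "x = xl n P y lam"
  define d where "d = (\<lambda>i. x i - z i)"
  define w where "w = (\<lambda>j. mvmult (n+3) P z (Suc j))"
  define e where "e = (\<lambda>j. x (Suc j) - y j)"
  have Pd: "mvmult (n+3) P d i = mvmult (n+3) P x i - mvmult (n+3) P z i" for i
    unfolding d_def by (rule mvmult_diff)
  have Pd0: "mvmult (n+3) P d 0 = 0" using Pd xl_row0[OF lam] z0 x_def by simp
  have Pd2: "mvmult (n+3) P d (n+2) = 0" using Pd xl_row2[OF lam] z2 x_def by simp
  have dS: "j \<le> n \<Longrightarrow> d (Suc j) = e j" for j using zS unfolding d_def e_def by simp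
  have lPd: "j \<le> n \<Longrightarrow> lam * mvmult (n+3) P d (Suc j) = - e j - lam * w j" for j
  proof -
    assume j: "j \<le> n"
    have "lam * mvmult (n+3) P d (Suc j) = lam * mvmult (n+3) P x (Suc j) - lam * mvmult (n+3) P z (Suc j)"
      using Pd by (simp add: right_diff_distrib)
    then show ?thesis using xl_rowS[OF lam j, of y] unfolding e_def w_def x_def by linarith
  qed
  have "0 \<le> lam * Bf (n+3) P d d" using lam Bf_nonneg by simp
  also have "lam * Bf (n+3) P d d = (\<Sum>j\<le>n. d (Suc j) * (lam * mvmult (n+3) P d (Suc j)))"
    unfolding Bf_split Pd0 Pd2 by (simp add: sum_distrib_left mult_ac)
  also have "\<dots> = (\<Sum>j\<le>n. - ((e j)^2) - lam * (e j * w j))"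
  proof (intro sum.cong refl)
    fix j assume "j \<in> {..n}"
    then have j: "j \<le> n" by simp
    have "d (Suc j) * (lam * mvmult (n+3) P d (Suc j)) = e j * (- e j - lam * w j)"
      using dS[OF j] lPd[OF j] by simp
    then show "d (Suc j) * (lam * mvmult (n+3) P d (Suc j)) = - ((e j)^2) - lam * (e j * w j)"
      by (simp add: power2_eq_square algebra_simps)
  qed
  also have "\<dots> \<le> (\<Sum>j\<le>n. - ((e j)^2) / 2 + lam^2 * (w j)^2 / 2)"
  proof (intro sum_mono)
    fix j
    have "0 \<le> (e j + lam * w j)^2" by simp
    then show "- ((e j)^2) - lam * (e j * w j) \<le> - ((e j)^2) / 2 + lam^2 * (w j)^2 / 2"
      by (simp add: power2_eq_square algebra_simps)
  qed
  also have "\<dots> = - (\<Sum>j\<le>n. (e j)^2) / 2 + lam^2 * (\<Sum>j\<le>n. (w j)^2) / 2"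
    by (simp add: sum.distrib sum_subtractf sum_divide_distrib sum_distrib_left sum_negf)
  finally show ?thesis unfolding e_def w_def x_def by simp
qed

lemma part1_ends:
  assumes lam: "lam > 0" and z0: "mvmult (n+3) P z 0 = 0" and z2: "mvmult (n+3) P z (n+2) = 0"
    and zS: "\<forall>j\<le>n. z (Suc j) = y j"
  shows "P 0 0 * (xl n P y lam 0 - z 0) + P 0 (n+2) * (xl n P y lam (n+2) - z (n+2))
           = - (\<Sum>j\<le>n. P 0 (Suc j) * (xl n P y lam (Suc j) - y j))"
    "P (n+2) 0 * (xl n P y lam 0 - z 0) + P (n+2) (n+2) * (xl n P y lam (n+2) - z (n+2))
           = - (\<Sum>j\<le>n. P (n+2) (Suc j) * (xl n P y lam (Suc j) - y j))"
proof -
  define x where "x = xl n P y lam"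
  define d where "d = (\<lambda>i. x i - z i)"
  have Pd: "mvmult (n+3) P d i = mvmult (n+3) P x i - mvmult (n+3) P z i" for i
    unfolding d_def by (rule mvmult_diff)
  have Pd0: "mvmult (n+3) P d 0 = 0" using Pd xl_row0[OF lam] z0 x_def by simp
  have Pd2: "mvmult (n+3) P d (n+2) = 0" using Pd xl_row2[OF lam] z2 x_def by simp
  have s: "(\<Sum>j\<le>n. P i (Suc j) * d (Suc j)) = (\<Sum>j\<le>n. P i (Suc j) * (x (Suc j) - y j))" for i
    using zS unfolding d_def by (intro sum.cong) auto
  show "P 0 0 * (xl n P y lam 0 - z 0) + P 0 (n+2) * (xl n P y lam (n+2) - z (n+2))
           = - (\<Sum>j\<le>n. P 0 (Suc j) * (xl n P y lam (Suc j) - y j))"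
    using Pd0 unfolding mv_split s unfolding d_def x_def by linarith
  show "P (n+2) 0 * (xl n P y lam 0 - z 0) + P (n+2) (n+2) * (xl n P y lam (n+2) - z (n+2))
           = - (\<Sum>j\<le>n. P (n+2) (Suc j) * (xl n P y lam (Suc j) - y j))"
    using Pd2 unfolding mv_split s unfolding d_def x_def by linarith
qed


lemma part1:
  "\<exists>u1 u2. (\<forall>a b. quadform (n+3) P (joinv n u1 y u2) \<le> quadform (n+3) P (joinv n a y b))
    \<and> u1 * P 0 0 + u2 * P 0 (n+2) = - (\<Sum>i\<le>n. y i * P 0 (i+1))
    \<and> u1 * P (n+2) 0 + u2 * P (n+2) (n+2) = - (\<Sum>i\<le>n. y i * P (n+2) (i+1))
    \<and> (\<forall>i<n+3. ((\<lambda>lam. mvmult (n+3) (Hpen n P lam) (embed0 n y) i) \<longlongrightarrow> joinv n u1 y u2 i) (at_right 0))"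
proof -
  define c0 where "c0 = (\<Sum>i\<le>n. y i * P 0 (i+1))"
  define c2 where "c2 = (\<Sum>i\<le>n. y i * P (n+2) (i+1))"
  define dt where "dt = P 0 0 * P (n+2) (n+2) - P 0 (n+2) * P (n+2) 0"
  define u1 where "u1 = (P (n+2) (n+2) * (-c0) - P 0 (n+2) * (-c2)) / dt"
  define u2 where "u2 = (P 0 0 * (-c2) - P (n+2) 0 * (-c0)) / dt"
  have dt: "dt \<noteq> 0" using det unfolding dt_def .
  have du1: "dt * u1 = P (n+2) (n+2) * (-c0) - P 0 (n+2) * (-c2)" using dt unfolding u1_def by simp
  have du2: "dt * u2 = P 0 0 * (-c2) - P (n+2) 0 * (-c0)" using dt unfolding u2_def by simp
  have "dt * (u1 * P 0 0 + u2 * P 0 (n+2)) = (dt * u1) * P 0 0 + (dt * u2) * P 0 (n+2)"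
    by (simp add: algebra_simps)
  also have "\<dots> = dt * (- c0)" by (simp only: du1 du2) (simp add: dt_def algebra_simps)
  finally have "dt * (u1 * P 0 0 + u2 * P 0 (n+2)) = dt * (- c0)" .
  then have eq1: "u1 * P 0 0 + u2 * P 0 (n+2) = - c0" using dt mult_left_cancel by blast
  have "dt * (u1 * P (n+2) 0 + u2 * P (n+2) (n+2)) = (dt * u1) * P (n+2) 0 + (dt * u2) * P (n+2) (n+2)"
    by (simp add: algebra_simps)
  also have "\<dots> = dt * (- c2)" by (simp only: du1 du2) (simp add: dt_def algebra_simps)
  finally have "dt * (u1 * P (n+2) 0 + u2 * P (n+2) (n+2)) = dt * (- c2)" .
  then have eq2: "u1 * P (n+2) 0 + u2 * P (n+2) (n+2) = - c2" using dt mult_left_cancel by blast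
  define z where "z = joinv n u1 y u2"
  have z0: "z 0 = u1" and z2: "z (n+2) = u2" and zS: "\<forall>j\<le>n. z (Suc j) = y j"
    unfolding z_def joinv_def by auto
  have sc0: "(\<Sum>j\<le>n. P 0 (Suc j) * z (Suc j)) = c0"
    unfolding c0_def using zS by (intro sum.cong) auto
  have sc2: "(\<Sum>j\<le>n. P (n+2) (Suc j) * z (Suc j)) = c2"
    unfolding c2_def using zS by (intro sum.cong) auto
  have Pz0: "mvmult (n+3) P z 0 = 0"
    unfolding mv_split sc0 z0 z2 using eq1 by (simp add: algebra_simps)
  have Pz2: "mvmult (n+3) P z (n+2) = 0"
    unfolding mv_split sc2 z0 z2 using eq2 by (simp add: algebra_simps)
  have minim: "quadform (n+3) P z \<le> quadform (n+3) P (joinv n a y b)" for a b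
  proof -
    define wv where "wv = joinv n a y b"
    define dl where "dl = (\<lambda>i. wv i - z i)"
    have wv: "wv = (\<lambda>i. z i + dl i)" unfolding dl_def by simp
    have dlS: "\<forall>j\<le>n. dl (Suc j) = 0" unfolding dl_def wv_def z_def joinv_def by auto
    have "Bf (n+3) P dl z = 0"
      unfolding Bf_split Pz0 Pz2 using dlS by simp
    moreover have "Bf (n+3) P z dl = Bf (n+3) P dl z" by (rule Bf_sym[OF sym])
    ultimately have "Bf (n+3) P wv wv = Bf (n+3) P z z + Bf (n+3) P dl dl"
      unfolding wv Bf_add_left Bf_add_right by simp
    then show ?thesis using Bf_nonneg[of dl] unfolding quadform_Bf wv_def by simp
  qed
  define W where "W = (\<Sum>j\<le>n. (mvmult (n+3) P z (Suc j))^2)"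
  have W0: "W \<ge> 0" unfolding W_def by (simp add: sum_nonneg)
  have evpos: "eventually (\<lambda>lam::real. lam > 0) (at_right 0)" by (rule eventually_at_right_less)
  have mid: "((\<lambda>lam. xl n P y lam (Suc j) - y j) \<longlongrightarrow> 0) (at_right 0)" if j: "j \<le> n" for j
  proof (rule Lim_null_comparison)
    show "eventually (\<lambda>lam. norm (xl n P y lam (Suc j) - y j) \<le> lam * sqrt W) (at_right 0)"
      using evpos
    proof eventually_elim
      case (elim lam)
      have "(xl n P y lam (Suc j) - y j)^2 \<le> (\<Sum>j\<le>n. (xl n P y lam (Suc j) - y j)^2)"
        by (rule member_le_sum) (use j in auto)
      also have "\<dots> \<le> lam^2 * W" unfolding W_def
        by (rule part1_est[OF elim Pz0 Pz2 zS])
      also have "\<dots> = (lam * sqrt W)^2"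
        using W0 by (simp add: power_mult_distrib)
      finally have "(xl n P y lam (Suc j) - y j)^2 \<le> (lam * sqrt W)^2" .
      then have "\<bar>xl n P y lam (Suc j) - y j\<bar> \<le> \<bar>lam * sqrt W\<bar>" by (simp only: abs_le_square_iff)
      then show ?case using elim W0 by simp
    qed
    have id0: "((\<lambda>lam::real. lam) \<longlongrightarrow> 0) (at_right 0)" by (rule tendsto_ident_at)
    then show "((\<lambda>lam. lam * sqrt W) \<longlongrightarrow> 0) (at_right 0)"
      using tendsto_mult[OF id0 tendsto_const[of "sqrt W"]] by simp
  qed
  have sumlim: "((\<lambda>lam. \<Sum>j\<le>n. P r (Suc j) * (xl n P y lam (Suc j) - y j)) \<longlongrightarrow> 0) (at_right 0)" for r
  proof (rule tendsto_null_sum)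
    fix j assume "j \<in> {..n}"
    then have j: "j \<le> n" by simp
    from tendsto_mult[OF tendsto_const[of "P r (Suc j)"] mid[OF j]]
    show "((\<lambda>lam. P r (Suc j) * (xl n P y lam (Suc j) - y j)) \<longlongrightarrow> 0) (at_right 0)" by simp
  qed
  define s0 where "s0 = (\<lambda>lam. \<Sum>j\<le>n. P 0 (Suc j) * (xl n P y lam (Suc j) - y j))"
  define s2 where "s2 = (\<lambda>lam. \<Sum>j\<le>n. P (n+2) (Suc j) * (xl n P y lam (Suc j) - y j))"
  have e0: "eventually (\<lambda>lam. xl n P y lam 0 - z 0 = (P (n+2) (n+2) * (- s0 lam) - P 0 (n+2) * (- s2 lam)) / dt) (at_right 0)"
    using evpos
  proof eventually_elim
    case (elim lam)
    note h = part1_ends[OF elim Pz0 Pz2 zS]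
    show ?case
      using cramer2(1)[OF h(1) h(2) det] by (simp add: s0_def s2_def dt_def)
  qed
  have e2: "eventually (\<lambda>lam. xl n P y lam (n+2) - z (n+2) = (P 0 0 * (- s2 lam) - P (n+2) 0 * (- s0 lam)) / dt) (at_right 0)"
    using evpos
  proof eventually_elim
    case (elim lam)
    note h = part1_ends[OF elim Pz0 Pz2 zS]
    show ?case
      using cramer2(2)[OF h(1) h(2) det] by (simp add: s0_def s2_def dt_def)
  qed
  have s0l: "(s0 \<longlongrightarrow> 0) (at_right 0)" unfolding s0_def by (rule sumlim)
  have s2l: "(s2 \<longlongrightarrow> 0) (at_right 0)" unfolding s2_def by (rule sumlim)
  have l0: "((\<lambda>lam. (P (n+2) (n+2) * (- s0 lam) - P 0 (n+2) * (- s2 lam)) / dt) \<longlongrightarrow> 0) (at_right 0)"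
  proof -
    have "((\<lambda>lam. (P (n+2) (n+2) * (- s0 lam) - P 0 (n+2) * (- s2 lam)) / dt) \<longlongrightarrow>
       (P (n+2) (n+2) * (- 0) - P 0 (n+2) * (- 0)) / dt) (at_right 0)"
      by (intro tendsto_intros s0l s2l dt)
    then show ?thesis by simp
  qed
  have l2: "((\<lambda>lam. (P 0 0 * (- s2 lam) - P (n+2) 0 * (- s0 lam)) / dt) \<longlongrightarrow> 0) (at_right 0)"
  proof -
    have "((\<lambda>lam. (P 0 0 * (- s2 lam) - P (n+2) 0 * (- s0 lam)) / dt) \<longlongrightarrow>
       (P 0 0 * (- 0) - P (n+2) 0 * (- 0)) / dt) (at_right 0)"
      by (intro tendsto_intros s0l s2l dt)
    then show ?thesis by simp
  qed
  have lim: "((\<lambda>lam. xl n P y lam i) \<longlongrightarrow> z i) (at_right 0)" if i: "i < n+3" for i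
  proof (rule LIM_zero_cancel)
    show "((\<lambda>lam. xl n P y lam i - z i) \<longlongrightarrow> 0) (at_right 0)"
      using i
    proof (cases rule: idx_cases)
      case 1 then show ?thesis using tendsto_cong[OF e0] l0 by simp
    next
      case 2 then show ?thesis using tendsto_cong[OF e2] l2 by simp
    next
      case (3 j) then show ?thesis using mid[of j] zS by simp
    qed
  qed
  have A: "\<forall>a b. quadform (n+3) P (joinv n u1 y u2) \<le> quadform (n+3) P (joinv n a y b)"
    using minim unfolding z_def by blast
  have D: "\<forall>i<n+3. ((\<lambda>lam. mvmult (n+3) (Hpen n P lam) (embed0 n y) i) \<longlongrightarrow> joinv n u1 y u2 i) (at_right 0)"
  proof (intro allI impI)
    fix i assume "i < n+3"
    from lim[OF this] show "((\<lambda>lam. mvmult (n+3) (Hpen n P lam) (embed0 n y) i) \<longlongrightarrow> joinv n u1 y u2 i) (at_right 0)"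
      unfolding z_def xl_def .
  qed
  have B: "u1 * P 0 0 + u2 * P 0 (n+2) = - (\<Sum>i\<le>n. y i * P 0 (i+1))" using eq1 unfolding c0_def .
  have C: "u1 * P (n+2) 0 + u2 * P (n+2) (n+2) = - (\<Sum>i\<le>n. y i * P (n+2) (i+1))" using eq2 unfolding c2_def .
  show ?thesis
    by (rule exI[of _ u1], rule exI[of _ u2], intro conjI) (fact A, fact B, fact C, fact D)
qed


lemma xl_min:
  assumes lam: "lam > 0" and v: "\<forall>i<n+3. mvmult (n+3) P v i = 0"
  shows "(\<Sum>i\<le>n. (y i - xl n P y lam (i+1))^2) \<le> (\<Sum>i\<le>n. (y i - v (i+1))^2)"
proof -
  define x where "x = xl n P y lam"
  define d where "d = (\<lambda>i. v i - x i)"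
  have Pd: "mvmult (n+3) P d i = - mvmult (n+3) P x i" if "i < n+3" for i
    unfolding d_def mvmult_diff using v that by simp
  have Px0: "mvmult (n+3) P x 0 = 0" unfolding x_def by (rule xl_row0[OF lam])
  have Px2: "mvmult (n+3) P x (n+2) = 0" unfolding x_def by (rule xl_row2[OF lam])
  have PxS: "j \<le> n \<Longrightarrow> y j - x (Suc j) = lam * mvmult (n+3) P x (Suc j)" for j
    using xl_rowS[OF lam, of j y] unfolding x_def by linarith
  have "(\<Sum>j\<le>n. d (Suc j) * (y j - x (Suc j))) = (\<Sum>j\<le>n. lam * (d (Suc j) * mvmult (n+3) P x (Suc j)))"
    using PxS by (intro sum.cong) auto
  also have "\<dots> = lam * Bf (n+3) P d x"
    unfolding Bf_split Px0 Px2 by (simp add: sum_distrib_left)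
  also have "Bf (n+3) P d x = Bf (n+3) P x d" by (rule Bf_sym[OF sym])
  also have "Bf (n+3) P x d = - Bf (n+3) P x x"
    unfolding Bf_def using Pd by (simp add: sum_negf[symmetric])
  finally have cross: "(\<Sum>j\<le>n. d (Suc j) * (y j - x (Suc j))) = - (lam * Bf (n+3) P x x)" by simp
  have "(\<Sum>i\<le>n. (y i - v (i+1))^2)
     = (\<Sum>j\<le>n. (y j - x (Suc j))^2 - 2 * (d (Suc j) * (y j - x (Suc j))) + (d (Suc j))^2)"
    unfolding d_def by (intro sum.cong) (auto simp: power2_eq_square algebra_simps)
  also have "\<dots> = (\<Sum>j\<le>n. (y j - x (Suc j))^2) - 2 * (\<Sum>j\<le>n. d (Suc j) * (y j - x (Suc j)))
      + (\<Sum>j\<le>n. (d (Suc j))^2)"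
    by (simp add: sum.distrib sum_subtractf sum_distrib_left)
  finally have "(\<Sum>i\<le>n. (y i - v (i+1))^2) = (\<Sum>j\<le>n. (y j - x (Suc j))^2) + 2 * (lam * Bf (n+3) P x x)
      + (\<Sum>j\<le>n. (d (Suc j))^2)" unfolding cross by simp
  moreover have "lam * Bf (n+3) P x x \<ge> 0" using lam Bf_nonneg by simp
  moreover have "(\<Sum>j\<le>n. (d (Suc j))^2) \<ge> 0" by (simp add: sum_nonneg)
  ultimately show ?thesis unfolding x_def by simp
qed

lemma min_unique:
  assumes v1: "\<forall>i<n+3. mvmult (n+3) P v1 i = 0" and v2: "\<forall>i<n+3. mvmult (n+3) P v2 i = 0"
    and m1: "\<forall>v. (\<forall>i<n+3. mvmult (n+3) P v i = 0) \<longrightarrow> (\<Sum>i\<le>n. (y i - v1 (i+1))^2) \<le> (\<Sum>i\<le>n. (y i - v (i+1))^2)"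
    and m2: "\<forall>v. (\<forall>i<n+3. mvmult (n+3) P v i = 0) \<longrightarrow> (\<Sum>i\<le>n. (y i - v2 (i+1))^2) \<le> (\<Sum>i\<le>n. (y i - v (i+1))^2)"
  shows "\<forall>i<n+3. v1 i = v2 i"
proof -
  define c where "c = (\<lambda>i. (1/2) * v1 i + (1/2) * v2 i)"
  have c: "\<forall>i<n+3. mvmult (n+3) P c i = 0" unfolding c_def mvmult_lin using v1 v2 by simp
  have e12: "(\<Sum>i\<le>n. (y i - v1 (i+1))^2) = (\<Sum>i\<le>n. (y i - v2 (i+1))^2)"
    using m1 m2 v1 v2 by (meson order.antisym)
  have "(\<Sum>i\<le>n. (y i - c (i+1))^2) = (\<Sum>i\<le>n. ((y i - v1 (i+1))^2 + (y i - v2 (i+1))^2) / 2 - ((v1 (i+1) - v2 (i+1))/2)^2)"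
    unfolding c_def by (intro sum.cong) (auto simp: power2_eq_square field_simps)
  also have "\<dots> = ((\<Sum>i\<le>n. (y i - v1 (i+1))^2) + (\<Sum>i\<le>n. (y i - v2 (i+1))^2)) / 2 - (\<Sum>i\<le>n. ((v1 (i+1) - v2 (i+1))/2)^2)"
    by (simp only: sum_subtractf sum_divide_distrib[symmetric] sum.distrib)
  finally have "(\<Sum>i\<le>n. (y i - c (i+1))^2) = (\<Sum>i\<le>n. (y i - v1 (i+1))^2) - (\<Sum>i\<le>n. ((v1 (i+1) - v2 (i+1))/2)^2)"
    using e12 by simp
  moreover have "(\<Sum>i\<le>n. (y i - v1 (i+1))^2) \<le> (\<Sum>i\<le>n. (y i - c (i+1))^2)" using m1 c by blast
  ultimately have "(\<Sum>i\<le>n. ((v1 (i+1) - v2 (i+1))/2)^2) \<le> 0" by linarith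
  moreover have "(\<Sum>i\<le>n. ((v1 (i+1) - v2 (i+1))/2)^2) \<ge> 0" by (simp add: sum_nonneg)
  ultimately have "(\<Sum>i\<le>n. ((v1 (i+1) - v2 (i+1))/2)^2) = 0" by linarith
  then have mid0: "\<forall>i\<le>n. v1 (Suc i) = v2 (Suc i)" by (simp add: sum_nonneg_eq_0_iff)
  define dd where "dd = (\<lambda>i. v1 i - v2 i)"
  have Pdd: "mvmult (n+3) P dd i = 0" if "i < n+3" for i
    unfolding dd_def mvmult_diff using v1 v2 that by simp
  have "dd 0 = 0" "dd (n+2) = 0" using ends_zero[of dd] Pdd mid0 unfolding dd_def by auto
  then have "v1 0 = v2 0" "v1 (n+2) = v2 (n+2)" unfolding dd_def by auto
  then show ?thesis using mid0
    by (intro allI impI) (erule idx_cases; simp)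
qed


lemma xl_bound: "\<exists>C. \<forall>lam\<ge>1. \<forall>i<n+3. \<bar>xl n P y lam i\<bar> \<le> C i"
proof -
  define Y where "Y = (\<Sum>i\<le>n. (y i)^2)"
  define M1 where "M1 = (\<lambda>i j. 1 * P i j + mmult (n + 1) (transp (PiM n)) (PiM n) i j)"
  define H1 where "H1 = Hpen n P 1"
  have inv1: "is_inverse (n+3) M1 H1" unfolding M1_def H1_def by (rule Hpen_inverse) simp
  define C where "C = (\<lambda>i. \<Sum>k<n+3. \<bar>H1 i k\<bar> * (\<bar>Ev n y k\<bar> + 2 * sqrt Y))"
  have "\<forall>lam\<ge>1. \<forall>i<n+3. \<bar>xl n P y lam i\<bar> \<le> C i"
  proof (intro allI impI)
    fix lam :: real and i assume lam: "lam \<ge> 1" and i: "i < n+3"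
    have lam0: "lam > 0" using lam by simp
    define x where "x = xl n P y lam"
    have Dx: "\<bar>Dv n k * x k\<bar> \<le> sqrt Y" if k: "k < n+3" for k
      using k
    proof (cases rule: idx_cases)
      case 1 then show ?thesis by (simp add: Dv_def Y_def sum_nonneg)
    next
      case 2 then show ?thesis by (simp add: Dv_def Y_def sum_nonneg)
    next
      case (3 j)
      have "(x (Suc j))^2 \<le> (\<Sum>i\<le>n. (x (Suc i))^2)" by (rule member_le_sum) (use 3 in auto)
      also have "\<dots> \<le> Y" unfolding Y_def x_def by (rule xl_mid_bound[OF lam0])
      finally have "sqrt ((x (Suc j))^2) \<le> sqrt Y" by (rule real_sqrt_le_mono)
      then show ?thesis using 3 by (simp add: Dv_def)
    qed
    have vb: "\<bar>mvmult (n+3) M1 x k\<bar> \<le> \<bar>Ev n y k\<bar> + 2 * sqrt Y" if k: "k < n+3" for k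
    proof -
      have e: "lam * mvmult (n+3) P x k + Dv n k * x k = Ev n y k"
        unfolding x_def by (rule xl_eq[OF lam0 k])
      then have "Ev n y k - Dv n k * x k = lam * mvmult (n+3) P x k" by linarith
      then have a1: "\<bar>Ev n y k - Dv n k * x k\<bar> = lam * \<bar>mvmult (n+3) P x k\<bar>"
        using lam0 by (simp add: abs_mult)
      have "1 * \<bar>mvmult (n+3) P x k\<bar> \<le> lam * \<bar>mvmult (n+3) P x k\<bar>"
        by (rule mult_right_mono[OF lam abs_ge_zero])
      then have a2: "\<bar>mvmult (n+3) P x k\<bar> \<le> \<bar>Ev n y k\<bar> + \<bar>Dv n k * x k\<bar>"
        using a1 abs_triangle_ineq4[of "Ev n y k" "Dv n k * x k"] by linarith
      have "mvmult (n+3) M1 x k = 1 * mvmult (n+3) P x k + Dv n k * x k"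
        unfolding M1_def by (rule mvmult_M[OF k])
      then have "\<bar>mvmult (n+3) M1 x k\<bar> \<le> \<bar>mvmult (n+3) P x k\<bar> + \<bar>Dv n k * x k\<bar>" by simp
      then show ?thesis using a2 Dx[OF k] by linarith
    qed
    have "x i = (\<Sum>k<n+3. H1 i k * mvmult (n+3) M1 x k)" using inv_left[OF inv1 i] by simp
    then have "\<bar>x i\<bar> \<le> (\<Sum>k<n+3. \<bar>H1 i k * mvmult (n+3) M1 x k\<bar>)" using sum_abs by metis
    also have "\<dots> \<le> C i" unfolding C_def
    proof (rule sum_mono)
      fix k assume "k \<in> {..<n+3}"
      then have k: "k < n+3" by simp
      show "\<bar>H1 i k * mvmult (n+3) M1 x k\<bar> \<le> \<bar>H1 i k\<bar> * (\<bar>Ev n y k\<bar> + 2 * sqrt Y)"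
        unfolding abs_mult by (rule mult_left_mono[OF vb[OF k] abs_ge_zero])
    qed
    finally show "\<bar>xl n P y lam i\<bar> \<le> C i" unfolding x_def .
  qed
  then show ?thesis by blast
qed

lemma limit_point:
  assumes L: "\<forall>k. L k \<ge> real k + 1"
  shows "\<exists>r xb. strict_mono r \<and> (\<forall>i<n+3. (\<lambda>k. xl n P y (L (r k)) i) \<longlonglongrightarrow> xb i)
     \<and> (\<forall>i<n+3. mvmult (n+3) P xb i = 0)
     \<and> (\<forall>v. (\<forall>i<n+3. mvmult (n+3) P v i = 0) \<longrightarrow> (\<Sum>i\<le>n. (y i - xb (i+1))^2) \<le> (\<Sum>i\<le>n. (y i - v (i+1))^2))"
proof -
  obtain C where C: "\<forall>lam\<ge>1. \<forall>i<n+3. \<bar>xl n P y lam i\<bar> \<le> C i" using xl_bound by blast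
  have "\<forall>k. \<forall>i<n+3. \<bar>xl n P y (L k) i\<bar> \<le> C i"
  proof (rule allI)
    fix k
    have "L k \<ge> 1" using L[rule_format, of k] by simp
    then show "\<forall>i<n+3. \<bar>xl n P y (L k) i\<bar> \<le> C i" using C by blast
  qed
  then obtain r xb where r: "strict_mono r" "\<forall>i<n+3. (\<lambda>k. xl n P y (L (r k)) i) \<longlonglongrightarrow> xb i"
    using bw_finite[of "n+3" "\<lambda>k i. xl n P y (L k) i" C] by blast
  have Lpos: "L (r k) > 0" for k using L[rule_format, of "r k"] by simp
  have invL: "(\<lambda>k. inverse (L (r k))) \<longlonglongrightarrow> 0"
  proof (rule Lim_null_comparison)
    show "eventually (\<lambda>k. norm (inverse (L (r k))) \<le> inverse (real (Suc k))) sequentially"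
    proof (intro always_eventually allI)
      fix k
      have "real (Suc k) \<le> L (r k)" using L[rule_format, of "r k"] seq_suble[OF r(1), of k] by simp
      then have "inverse (L (r k)) \<le> inverse (real (Suc k))" by (rule le_imp_inverse_le) simp
      moreover have "inverse (L (r k)) > 0" using Lpos[of k] by simp
      ultimately show "norm (inverse (L (r k))) \<le> inverse (real (Suc k))" by simp
    qed
    show "(\<lambda>k. inverse (real (Suc k))) \<longlonglongrightarrow> 0" by (rule LIMSEQ_inverse_real_of_nat)
  qed
  have K: "\<forall>i<n+3. mvmult (n+3) P xb i = 0"
  proof (intro allI impI)
    fix i assume i: "i < n+3"
    have a: "(\<lambda>k. mvmult (n+3) P (xl n P y (L (r k))) i) \<longlonglongrightarrow> mvmult (n+3) P xb i"
      unfolding mvmult_def by (intro tendsto_sum tendsto_mult tendsto_const) (use r(2) in auto)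
    have eq: "mvmult (n+3) P (xl n P y (L (r k))) i = (Ev n y i - Dv n i * xl n P y (L (r k)) i) * inverse (L (r k))" for k
      using xl_eq[OF Lpos[of k] i, of y] Lpos[of k] by (simp add: field_simps)
    have b: "(\<lambda>k. mvmult (n+3) P (xl n P y (L (r k))) i) \<longlonglongrightarrow> (Ev n y i - Dv n i * xb i) * 0"
      unfolding eq by (intro tendsto_mult tendsto_diff tendsto_const invL r(2)[rule_format, OF i])
    from LIMSEQ_unique[OF a b] show "mvmult (n+3) P xb i = 0" by simp
  qed
  have M: "\<forall>v. (\<forall>i<n+3. mvmult (n+3) P v i = 0) \<longrightarrow> (\<Sum>i\<le>n. (y i - xb (i+1))^2) \<le> (\<Sum>i\<le>n. (y i - v (i+1))^2)"
  proof (intro allI impI)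
    fix v assume v: "\<forall>i<n+3. mvmult (n+3) P v i = 0"
    have lim: "(\<lambda>k. \<Sum>i\<le>n. (y i - xl n P y (L (r k)) (i+1))^2) \<longlonglongrightarrow> (\<Sum>i\<le>n. (y i - xb (i+1))^2)"
      by (intro tendsto_sum tendsto_power tendsto_diff tendsto_const) (use r(2) in auto)
    show "(\<Sum>i\<le>n. (y i - xb (i+1))^2) \<le> (\<Sum>i\<le>n. (y i - v (i+1))^2)"
      by (rule LIMSEQ_le_const2[OF lim], intro exI[of _ 0] allI impI, rule xl_min[OF Lpos v])
  qed
  show ?thesis using r K M by blast
qed


lemma part2:
  "\<exists>x. (\<forall>i<n + 3. mvmult (n + 3) P x i = 0)
      \<and> (\<forall>x'. (\<forall>i<n + 3. mvmult (n + 3) P x' i = 0) \<longrightarrow>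
              (\<Sum>i\<le>n. (y i - x (i + 1))\<^sup>2) \<le> (\<Sum>i\<le>n. (y i - x' (i + 1))\<^sup>2))
      \<and> (\<forall>i<n + 3. ((\<lambda>lam. mvmult (n + 3) (Hpen n P lam) (embed0 n y) i)
                      \<longlongrightarrow> x i) at_top)"
proof -
  obtain r w where w: "strict_mono r" "\<forall>i<n+3. (\<lambda>k. xl n P y (real (r k) + 1) i) \<longlonglongrightarrow> w i"
     "\<forall>i<n+3. mvmult (n+3) P w i = 0"
     "\<forall>v. (\<forall>i<n+3. mvmult (n+3) P v i = 0) \<longrightarrow> (\<Sum>i\<le>n. (y i - w (i+1))^2) \<le> (\<Sum>i\<le>n. (y i - v (i+1))^2)"
    using limit_point[where L="\<lambda>k. real k + 1" and y=y] by auto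
  have conv: "((\<lambda>lam. xl n P y lam i) \<longlongrightarrow> w i) at_top" if i: "i < n+3" for i
  proof (rule ccontr)
    assume nc: "\<not> ((\<lambda>lam. xl n P y lam i) \<longlongrightarrow> w i) at_top"
    then obtain \<epsilon> :: real where \<epsilon>: "\<epsilon> > 0" "\<not> eventually (\<lambda>lam. dist (xl n P y lam i) (w i) < \<epsilon>) at_top"
      unfolding tendsto_iff by blast
    have ex: "\<forall>k. \<exists>lam. lam \<ge> real k + 1 \<and> \<not> dist (xl n P y lam i) (w i) < \<epsilon>"
      using \<epsilon>(2) unfolding eventually_at_top_linorder by (meson order.refl)
    define L where "L = (\<lambda>k. SOME lam. lam \<ge> real k + 1 \<and> \<not> dist (xl n P y lam i) (w i) < \<epsilon>)"
    have L: "L k \<ge> real k + 1 \<and> \<not> dist (xl n P y (L k) i) (w i) < \<epsilon>" for k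
      unfolding L_def using someI_ex[OF ex[rule_format, of k]] .
    obtain r2 xb where xb: "strict_mono r2" "\<forall>i<n+3. (\<lambda>k. xl n P y (L (r2 k)) i) \<longlonglongrightarrow> xb i"
      "\<forall>i<n+3. mvmult (n+3) P xb i = 0"
      "\<forall>v. (\<forall>i<n+3. mvmult (n+3) P v i = 0) \<longrightarrow> (\<Sum>i\<le>n. (y i - xb (i+1))^2) \<le> (\<Sum>i\<le>n. (y i - v (i+1))^2)"
      using limit_point[where L=L and y=y] L by blast
    have "\<forall>i<n+3. xb i = w i" by (rule min_unique[OF xb(3) w(3) xb(4) w(4)])
    then have "(\<lambda>k. xl n P y (L (r2 k)) i) \<longlonglongrightarrow> w i" using xb(2) i by auto
    then have "eventually (\<lambda>k. dist (xl n P y (L (r2 k)) i) (w i) < \<epsilon>) sequentially"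
      using \<epsilon>(1) tendstoD by blast
    then obtain k where "dist (xl n P y (L (r2 k)) i) (w i) < \<epsilon>"
      unfolding eventually_sequentially by blast
    with L[of "r2 k"] show False by blast
  qed
  have C: "\<forall>i<n + 3. ((\<lambda>lam. mvmult (n + 3) (Hpen n P lam) (embed0 n y) i) \<longlongrightarrow> w i) at_top"
    using conv unfolding xl_def by blast
  have B: "\<forall>x'. (\<forall>i<n + 3. mvmult (n + 3) P x' i = 0) \<longrightarrow>
              (\<Sum>i\<le>n. (y i - w (i + 1))\<^sup>2) \<le> (\<Sum>i\<le>n. (y i - x' (i + 1))\<^sup>2)"
    using w(4) by blast
  show ?thesis by (rule exI[of _ w], intro conjI) (fact w(3), fact B, fact C)
qed

end

theorem corollary2:
  fixes n :: nat and P :: rmat and y :: rvec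
  assumes "n \<ge> 1"
    and "symmetric_mat (n + 3) P"
    and "nonneg_definite (n + 3) P"
    and "P 0 0 * P (n + 2) (n + 2) - P 0 (n + 2) * P (n + 2) 0 \<noteq> 0"
  shows
    "(\<exists>u1 u2.
        (\<forall>a b. quadform (n + 3) P (joinv n u1 y u2) \<le> quadform (n + 3) P (joinv n a y b))
      \<and> u1 * P 0 0 + u2 * P 0 (n + 2) = - (\<Sum>i\<le>n. y i * P 0 (i + 1))
      \<and> u1 * P (n + 2) 0 + u2 * P (n + 2) (n + 2) = - (\<Sum>i\<le>n. y i * P (n + 2) (i + 1))
      \<and> (\<forall>i<n + 3. ((\<lambda>lam. mvmult (n + 3) (Hpen n P lam) (embed0 n y) i)
                      \<longlongrightarrow> joinv n u1 y u2 i) (at_right 0))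
      \<and> ((\<Sum>i\<le>n. y i * P 0 (i + 1)) \<noteq> 0 \<or> (\<Sum>i\<le>n. y i * P (n + 2) (i + 1)) \<noteq> 0
           \<longrightarrow> \<not> (u1 = 0 \<and> u2 = 0)))
   \<and> (\<exists>x. (\<forall>i<n + 3. mvmult (n + 3) P x i = 0)
      \<and> (\<forall>x'. (\<forall>i<n + 3. mvmult (n + 3) P x' i = 0) \<longrightarrow>
              (\<Sum>i\<le>n. (y i - x (i + 1))\<^sup>2) \<le> (\<Sum>i\<le>n. (y i - x' (i + 1))\<^sup>2))
      \<and> (\<forall>i<n + 3. ((\<lambda>lam. mvmult (n + 3) (Hpen n P lam) (embed0 n y) i)
                      \<longlongrightarrow> x i) at_top))"
proof (rule conjI)
  obtain u1 u2 where u: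
    "\<forall>a b. quadform (n + 3) P (joinv n u1 y u2) \<le> quadform (n + 3) P (joinv n a y b)"
    "u1 * P 0 0 + u2 * P 0 (n + 2) = - (\<Sum>i\<le>n. y i * P 0 (i + 1))"
    "u1 * P (n + 2) 0 + u2 * P (n + 2) (n + 2) = - (\<Sum>i\<le>n. y i * P (n + 2) (i + 1))"
    "\<forall>i<n + 3. ((\<lambda>lam. mvmult (n + 3) (Hpen n P lam) (embed0 n y) i) \<longlongrightarrow> joinv n u1 y u2 i) (at_right 0)"
    using part1[OF assms(2,3,4), of y] by blast
  have E: "(\<Sum>i\<le>n. y i * P 0 (i + 1)) \<noteq> 0 \<or> (\<Sum>i\<le>n. y i * P (n + 2) (i + 1)) \<noteq> 0
           \<longrightarrow> \<not> (u1 = 0 \<and> u2 = 0)"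
    using u(2,3) by auto
  show "\<exists>u1 u2.
        (\<forall>a b. quadform (n + 3) P (joinv n u1 y u2) \<le> quadform (n + 3) P (joinv n a y b))
      \<and> u1 * P 0 0 + u2 * P 0 (n + 2) = - (\<Sum>i\<le>n. y i * P 0 (i + 1))
      \<and> u1 * P (n + 2) 0 + u2 * P (n + 2) (n + 2) = - (\<Sum>i\<le>n. y i * P (n + 2) (i + 1))
      \<and> (\<forall>i<n + 3. ((\<lambda>lam. mvmult (n + 3) (Hpen n P lam) (embed0 n y) i)
                      \<longlongrightarrow> joinv n u1 y u2 i) (at_right 0))
      \<and> ((\<Sum>i\<le>n. y i * P 0 (i + 1)) \<noteq> 0 \<or> (\<Sum>i\<le>n. y i * P (n + 2) (i + 1)) \<noteq> 0
           \<longrightarrow> \<not> (u1 = 0 \<and> u2 = 0))"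
    by (rule exI[of _ u1], rule exI[of _ u2], intro conjI) (fact u(1), fact u(2), fact u(3), fact u(4), fact E)
next
  show "\<exists>x. (\<forall>i<n + 3. mvmult (n + 3) P x i = 0)
      \<and> (\<forall>x'. (\<forall>i<n + 3. mvmult (n + 3) P x' i = 0) \<longrightarrow>
              (\<Sum>i\<le>n. (y i - x (i + 1))\<^sup>2) \<le> (\<Sum>i\<le>n. (y i - x' (i + 1))\<^sup>2))
      \<and> (\<forall>i<n + 3. ((\<lambda>lam. mvmult (n + 3) (Hpen n P lam) (embed0 n y) i)
                      \<longlongrightarrow> x i) at_top)"
    by (rule part2[OF assms(2,3,4)])
qed

end
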